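(* Let $n\ge 3$, $0<m<\frac{n-2}{n}$, $m\ne\frac{n-2}{n+2}$, $\lambda>0$, $\beta>0$. Let $v$ be the radially symmetric solution described in the context, $w(s)=r^2v(r)^{1-m}$ with $s=\log r$, $h(s)=w(s)-\frac{2(n-1)(n-2-nm)}{(1-m)\beta}s$, and \[ h_1(s)=h(s)+\frac{(n-1)[n-2-(n+2)m]}{(1-m)\beta}\log s . \] Then \[ \lim_{s\to\infty}\frac{s^2h_{1,s}(s)}{\log s}=-\frac{(n-1)(n-2-(n+2)m)^2}{2(n-2-nm)(1-m)\beta}. \]
   Context: $v=v(r)$, $r=|x|$, is the unique radially symmetric positive classical solution of $\frac{n-1}{m}\Delta v^m+\frac{2\beta}{1-m}v+\beta x\cdot\nabla v=0$ in $\mathbb{R}^n$ with $v(0)=\lambda$. $h_{1,s}$ denotes the derivative of $h_1$ in $s$. *)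

theory Defs
  imports "HOL-Analysis.Analysis"
begin

definition pdiff :: "'n::finite \<Rightarrow> (real^'n \<Rightarrow> real) \<Rightarrow> real^'n \<Rightarrow> real" where
  "pdiff i f x = deriv (\<lambda>t. f (x + t *\<^sub>R axis i 1)) 0"

definition C1_Rn :: "(real^'n::finite \<Rightarrow> real) \<Rightarrow> bool" where
  "C1_Rn f \<longleftrightarrow> (\<forall>i x. (\<lambda>t. f (x + t *\<^sub>R axis i 1)) differentiable (at 0))
               \<and> (\<forall>i. continuous_on UNIV (pdiff i f))"

definition C2_Rn :: "(real^'n::finite \<Rightarrow> real) \<Rightarrow> bool" where
  "C2_Rn f \<longleftrightarrow> C1_Rn f \<and> (\<forall>i. C1_Rn (pdiff i f))"

definition laplacian :: "(real^'n::finite \<Rightarrow> real) \<Rightarrow> real^'n \<Rightarrow> real" where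
  "laplacian f x = (\<Sum>i\<in>UNIV. pdiff i (pdiff i f) x)"

definition radial_solution :: "real \<Rightarrow> real \<Rightarrow> real \<Rightarrow> (real^'n::finite \<Rightarrow> real) \<Rightarrow> bool" where
  "radial_solution m \<beta> lam V \<longleftrightarrow>
     (\<forall>x. V x > 0) \<and> C1_Rn V \<and> C2_Rn (\<lambda>y. V y powr m) \<and> V 0 = lam \<and>
     (\<forall>x y. norm x = norm y \<longrightarrow> V x = V y) \<and>
     (\<forall>x. (real CARD('n) - 1) / m * laplacian (\<lambda>y. V y powr m) x
           + 2 * \<beta> / (1 - m) * V x + \<beta> * (\<Sum>i\<in>UNIV. x $ i * pdiff i V x) = 0)"

end

theory Submission
  imports Defs
begin

lemma barrier:
  fixes u u' :: "real \<Rightarrow> real"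
  assumes der: "\<And>s. s \<ge> s0 \<Longrightarrow> (u has_real_derivative u' s) (at s)"
    and d: "\<delta> > 0" and hyp: "\<And>s. s \<ge> s0 \<Longrightarrow> u s > C \<Longrightarrow> u' s \<le> -\<delta>"
  shows "eventually (\<lambda>s. u s \<le> C) at_top"
proof -
  define T where "T = s0 + \<bar>u s0 - C\<bar>/\<delta> + 1"
  have "u s \<le> C" if sT: "s \<ge> T" for s
  proof (rule ccontr)
    assume "\<not> u s \<le> C"
    hence us: "u s > C" by simp
    have "\<bar>u s0 - C\<bar>/\<delta> \<ge> 0" using d by simp
    hence ss0: "s > s0" using sT unfolding T_def by linarith
    have cont: "continuous_on {s0..s} u"
      proof (rule continuous_at_imp_continuous_on, intro ballI)
      fix x assume "x \<in> {s0..s}"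
      thus "isCont u x" using der[of x] by (auto intro: DERIV_isCont)
    qed
    define A where "A = {s0..s} \<inter> u -` {..C}"
    have clA: "closed A" unfolding A_def by (rule continuous_closed_preimage[OF cont]) auto
    show False
    proof (cases "A = {}")
      case True
      obtain z where z: "s0 < z" "z < s" "u s - u s0 = (s - s0) * u' z"
        using MVT2[OF ss0, of u u'] der by auto
      have "z \<notin> A" using True by auto
      hence "u z > C" using z unfolding A_def by auto
      hence "u' z \<le> -\<delta>" using hyp z by auto
      hence "(s - s0) * u' z \<le> (s - s0) * (-\<delta>)" using ss0 by (intro mult_left_mono) auto
      hence "u s \<le> u s0 - \<delta> * (s - s0)" using z by (simp add: algebra_simps)
      moreover have "\<delta> * (s - s0) \<ge> \<delta> * (\<bar>u s0 - C\<bar>/\<delta> + 1)"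
        using sT d unfolding T_def by (intro mult_left_mono) auto
      moreover have "\<delta> * (\<bar>u s0 - C\<bar>/\<delta> + 1) = \<bar>u s0 - C\<bar> + \<delta>" using d by (simp add: field_simps)
      ultimately show False using us d by linarith
    next
      case False
      have bdd: "bdd_above A" unfolding A_def by (rule bdd_aboveI[of _ s]) auto
      define t where "t = Sup A"
      have tA: "t \<in> A" unfolding t_def by (rule closed_contains_Sup[OF False bdd clA])
      hence ut: "u t \<le> C" and t1: "s0 \<le> t" "t \<le> s" unfolding A_def by auto
      have ts: "t < s" using ut us t1 by (cases "t = s") auto
      have gt: "u x > C" if "t < x" "x \<le> s" for x
      proof (rule ccontr)
        assume "\<not> u x > C"
        hence "x \<in> A" using that t1 unfolding A_def by auto
        hence "x \<le> t" unfolding t_def using bdd by (rule cSup_upper)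
        thus False using that by simp
      qed
      obtain z where z: "t < z" "z < s" "u s - u t = (s - t) * u' z"
        using MVT2[OF ts, of u u'] der t1 by auto
      have "u' z \<le> -\<delta>" using hyp[of z] gt[of z] z t1 by auto
      hence "(s - t) * u' z \<le> (s - t) * (-\<delta>)" using ts by (intro mult_left_mono) auto
      hence "u s \<le> u t - \<delta> * (s - t)" using z by (simp add: algebra_simps)
      moreover have "\<delta> * (s - t) > 0" using d ts by simp
      ultimately show False using ut us by linarith
    qed
  qed
  thus ?thesis unfolding eventually_at_top_linorder by blast
qed

lemma forward_pos:
  fixes u u' :: "real \<Rightarrow> real"
  assumes der: "\<And>s. s \<ge> s0 \<Longrightarrow> (u has_real_derivative u' s) (at s)"
    and u0: "u s0 > 0" and hyp: "\<And>s. s \<ge> s0 \<Longrightarrow> u s = 0 \<Longrightarrow> u' s > 0"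
  shows "\<forall>s\<ge>s0. u s > 0"
proof (rule ccontr)
  assume "\<not> (\<forall>s\<ge>s0. u s > 0)"
  then obtain s1 where s1: "s1 \<ge> s0" "u s1 \<le> 0" by force
  have cont: "continuous_on {s0..s1} u"
    proof (rule continuous_at_imp_continuous_on, intro ballI)
      fix x assume "x \<in> {s0..s1}"
      thus "isCont u x" using der[of x] by (auto intro: DERIV_isCont)
    qed
  define A where "A = {s0..s1} \<inter> u -` {..0}"
  have clA: "closed A" unfolding A_def by (rule continuous_closed_preimage[OF cont]) auto
  have ne: "A \<noteq> {}" using s1 unfolding A_def by auto
  have bdd: "bdd_below A" unfolding A_def by (rule bdd_belowI[of _ s0]) auto
  define t where "t = Inf A"
  have tA: "t \<in> A" unfolding t_def by (rule closed_contains_Inf[OF ne bdd clA])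
  hence ut: "u t \<le> 0" and t1: "s0 \<le> t" "t \<le> s1" unfolding A_def by auto
  have ts: "s0 < t" proof (rule ccontr) assume "\<not> s0 < t" hence "t = s0" using t1 by simp thus False using ut u0 by simp qed
  have gt: "u x > 0" if "s0 \<le> x" "x < t" for x
  proof (rule ccontr)
    assume "\<not> u x > 0"
    hence "x \<in> A" using that t1 unfolding A_def by auto
    hence "t \<le> x" unfolding t_def using bdd by (rule cInf_lower)
    thus False using that by simp
  qed
  have "u t = 0"
  proof (rule ccontr)
    assume "u t \<noteq> 0"
    hence "u t < 0" using ut by simp
    have ct: "continuous_on {s0..t} u" using t1 by (intro continuous_on_subset[OF cont]) auto
    obtain x where "s0 \<le> x" "x \<le> t" "u x = 0"
      using IVT2'[of u t 0 s0, OF _ _ _ ct] ut u0 t1 by auto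
    thus False using gt[of x] \<open>u t < 0\<close> by (cases "x = t") auto
  qed
  hence "u' t > 0" using hyp t1 by auto
  then obtain d where d: "d > 0" "\<forall>h>0. h < d \<longrightarrow> u (t - h) < u t"
    using DERIV_pos_inc_left[OF der[of t]] t1 by auto
  define h where "h = min (d/2) ((t - s0)/2)"
  have "h > 0" "h < d" using d ts unfolding h_def by auto
  hence "u (t - h) < 0" using d \<open>u t = 0\<close> by auto
  moreover have "h \<le> (t - s0)/2" unfolding h_def by (rule min.cobounded2)
  hence "s0 \<le> t - h" using ts by (simp add: field_simps)
  hence "u (t - h) > 0" using gt[of "t - h"] \<open>h > 0\<close> by auto
  ultimately show False by simp
qed

locale wysys =
  fixes p bb nn :: real and w y :: "real \<Rightarrow> real"
  assumes p_pos: "p > 0" and bb_pos: "bb > 0" and c0_pos: "nn - 2 - 2*p > 0"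
    and wpos: "\<And>s. w s > 0"
    and dw: "\<And>s. (w has_real_derivative w s * y s) (at s)"
    and dy: "\<And>s. (y has_real_derivative (-p*(y s - 2)^2 - (nn-2)*(y s - 2) - bb * w s * y s)) (at s)"
    and wbot: "(w \<longlongrightarrow> 0) at_bot"
begin

definition "c0 = 2*(nn-2) - 4*p"
definition "Q t = -p*(t-2)^2 - (nn-2)*(t-2)"

lemma c0pos: "c0 > 0" using c0_pos unfolding c0_def by simp

lemma Q_alt: "Q t = c0 - (nn-2-4*p)*t - p*t^2"
  unfolding Q_def c0_def by (simp add: power2_eq_square algebra_simps)

lemma dy': "(y has_real_derivative (Q (y s) - bb * w s * y s)) (at s)"
  using dy unfolding Q_def by simp

lemma S1: "\<exists>s0. y s0 > 0"
proof -
  have "eventually (\<lambda>s. w s < w 0) at_bot"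
    using wbot wpos[of 0] by (auto dest: order_tendstoD)
  then obtain N where N: "\<And>s. s \<le> N \<Longrightarrow> w s < w 0" unfolding eventually_at_bot_linorder by auto
  define s' where "s' = min N (-1)"
  have "s' < 0" "w s' < w 0" using N unfolding s'_def by auto
  then obtain z where z: "s' < z" "z < 0" "w 0 - w s' = (0 - s') * (w z * y z)"
    using MVT2[of s' 0 w "\<lambda>s. w s * y s"] dw by auto
  have "(- s') * (w z * y z) > 0" using z \<open>w s' < w 0\<close> by simp
  hence "w z * y z > 0" using \<open>s' < 0\<close> zero_less_mult_pos[of "- s'"] by simp
  hence "y z > 0" using wpos[of z] by (simp add: zero_less_mult_iff)
  thus ?thesis by blast
qed

definition "s0 = (SOME s. y s > 0)"

lemma ys0: "y s0 > 0" unfolding s0_def using S1 by (rule someI_ex)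

lemma ypos: "s \<ge> s0 \<Longrightarrow> y s > 0"
proof -
  have "\<forall>s\<ge>s0. y s > 0"
  proof (rule forward_pos[of s0 y])
    show "\<And>s. s0 \<le> s \<Longrightarrow> (y has_real_derivative (Q (y s) - bb * w s * y s)) (at s)"
      using dy' by blast
    show "y s0 > 0" by (rule ys0)
    show "\<And>s. s0 \<le> s \<Longrightarrow> y s = 0 \<Longrightarrow> 0 < Q (y s) - bb * w s * y s"
      using c0pos by (simp add: Q_alt)
  qed
  thus "s \<ge> s0 \<Longrightarrow> y s > 0" by blast
qed

lemma wmono: "s0 \<le> a \<Longrightarrow> a \<le> b \<Longrightarrow> w a \<le> w b"
  by (rule DERIV_nonneg_imp_nondecreasing[of a b w])
     (use dw ypos wpos in \<open>auto intro!: exI[of _ "w _ * y _"] less_imp_le\<close>)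

lemma Qmax: "Q t \<le> (nn-2)^2/(4*p)"
proof -
  have "0 \<le> p * (t - 2 + (nn-2)/(2*p))^2" using p_pos by simp
  also have "\<dots> = p*(t-2)^2 + (nn-2)*(t-2) + (nn-2)^2/(4*p)"
    using p_pos by (simp add: power2_eq_square field_simps)
  finally show ?thesis unfolding Q_def by simp
qed

lemma Qlow: "0 \<le> t \<Longrightarrow> t \<le> 1 \<Longrightarrow> Q t \<ge> c0 - (\<bar>nn-2-4*p\<bar> + p) * t"
proof -
  assume t: "0 \<le> t" "t \<le> 1"
  have "(nn-2-4*p)*t \<le> \<bar>nn-2-4*p\<bar> * t" using t by (intro mult_right_mono) auto
  moreover have "t*t \<le> t*1" using t by (intro mult_left_mono) auto
  hence "p*t^2 \<le> p*t" using t p_pos by (intro mult_left_mono) (auto simp: power2_eq_square)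
  ultimately show ?thesis unfolding Q_alt by (simp add: algebra_simps)
qed

lemma w_top: "filterlim w at_top at_top"
  unfolding filterlim_at_top
proof
  fix M
  show "eventually (\<lambda>s. M \<le> w s) at_top"
  proof (rule ccontr)
    assume ne: "\<not> eventually (\<lambda>s. M \<le> w s) at_top"
    have wM: "w s < M" if "s \<ge> s0" for s
    proof (rule ccontr)
      assume "\<not> w s < M"
      hence "\<forall>t\<ge>s. M \<le> w t" using wmono[of s] that by force
      thus False using ne unfolding eventually_at_top_linorder by blast
    qed
    have M0: "M > 0" using wM[of s0] wpos[of s0] by simp
    define K where "K = \<bar>nn-2-4*p\<bar> + p + bb*M"
    have K0: "K > 0" unfolding K_def using p_pos bb_pos M0 by (simp add: add_nonneg_pos)
    define \<delta> where "\<delta> = min 1 (c0/(2*K))"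
    have d0: "\<delta> > 0" using c0pos K0 unfolding \<delta>_def by simp
    have "eventually (\<lambda>s. - y s \<le> - \<delta>) at_top"
    proof (rule barrier[of s0 "\<lambda>s. - y s" "\<lambda>s. -(Q (y s) - bb * w s * y s)" "c0/2"])
      show "\<And>s. s0 \<le> s \<Longrightarrow> ((\<lambda>s. - y s) has_real_derivative - (Q (y s) - bb * w s * y s)) (at s)"
        using DERIV_minus[OF dy'] by simp
      show "c0/2 > 0" using c0pos by simp
      fix s assume s: "s0 \<le> s" "- \<delta> < - y s"
      have ys: "0 < y s" "y s \<le> 1" "y s \<le> c0/(2*K)" using ypos[OF s(1)] s(2) unfolding \<delta>_def by auto
      have "bb * w s * y s \<le> bb * M * y s" using wM[OF s(1)] ys bb_pos
        by (intro mult_right_mono mult_left_mono) auto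
      moreover have "Q (y s) \<ge> c0 - (\<bar>nn-2-4*p\<bar> + p) * y s" using Qlow ys by auto
      moreover have "K * y s \<le> K * (c0/(2*K))" using ys K0 by (intro mult_left_mono) auto
      moreover have "K * (c0/(2*K)) = c0/2" using K0 by simp
      moreover have "K * y s = (\<bar>nn-2-4*p\<bar> + p) * y s + bb * M * y s" unfolding K_def by (simp add: algebra_simps)
      ultimately have "Q (y s) - bb * w s * y s \<ge> c0/2" by linarith
      thus "- (Q (y s) - bb * w s * y s) \<le> - (c0 / 2)" by simp
    qed
    then obtain s2 where s2: "\<And>s. s \<ge> s2 \<Longrightarrow> y s \<ge> \<delta>" unfolding eventually_at_top_linorder by auto
    define s3 where "s3 = max s0 s2"
    define t where "t = s3 + M/(w s0 * \<delta>) + 1"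
    have pos: "w s0 * \<delta> > 0" using wpos d0 by simp
    have "M/(w s0 * \<delta>) > 0" using M0 pos by simp
    hence s3t: "s3 < t" unfolding t_def by simp
    obtain z where z: "s3 < z" "z < t" "w t - w s3 = (t - s3) * (w z * y z)"
      using MVT2[OF s3t, of w "\<lambda>s. w s * y s"] dw by auto
    have "w z \<ge> w s0" using wmono[of s0 z] z unfolding s3_def by auto
    moreover have "y z \<ge> \<delta>" using s2[of z] z unfolding s3_def by auto
    ultimately have "w z * y z \<ge> w s0 * \<delta>" using wpos[of s0] d0 by (intro mult_mono) auto
    hence "(t - s3) * (w z * y z) \<ge> (t - s3) * (w s0 * \<delta>)" using s3t by (intro mult_left_mono) auto
    moreover have "(t - s3) * (w s0 * \<delta>) = M + w s0 * \<delta>" unfolding t_def using d0 wpos[of s0] by (simp add: field_simps)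
    ultimately have "w t \<ge> M" using z wpos[of s3] pos by linarith
    thus False using wM[of t] s3t unfolding s3_def by simp
  qed
qed

end

context wysys begin

lemma ev_w_ge: "eventually (\<lambda>s. w s \<ge> M) at_top"
  using w_top unfolding filterlim_at_top by blast

lemma y0: "(y \<longlongrightarrow> 0) at_top"
proof (rule order_tendstoI)
  fix a :: real assume "a < 0"
  thus "eventually (\<lambda>s. a < y s) at_top"
    using ypos unfolding eventually_at_top_linorder by (meson less_trans)
next
  fix a :: real assume a0: "0 < a"
  define \<epsilon> where "\<epsilon> = a/2"
  have e0: "\<epsilon> > 0" using a0 unfolding \<epsilon>_def by simp
  define Qm where "Qm = (nn-2)^2/(4*p)"
  define W where "W = (Qm + 1)/(bb*\<epsilon>)"
  obtain s1 where s1: "\<And>s. s \<ge> s1 \<Longrightarrow> w s \<ge> W"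
    using ev_w_ge[of W] unfolding eventually_at_top_linorder by auto
  have "eventually (\<lambda>s. y s \<le> \<epsilon>) at_top"
  proof (rule barrier[of "max s0 s1" y "\<lambda>s. Q (y s) - bb * w s * y s" 1])
    show "\<And>s. max s0 s1 \<le> s \<Longrightarrow> (y has_real_derivative Q (y s) - bb * w s * y s) (at s)"
      using dy' by blast
    fix s assume s: "max s0 s1 \<le> s" "\<epsilon> < y s"
    have "w s * y s \<ge> W * \<epsilon>" using s1[of s] s e0 wpos[of s] by (intro mult_mono) auto
    moreover have "W * \<epsilon> = (Qm+1)/bb" unfolding W_def using e0 bb_pos by simp
    ultimately have "bb * (w s * y s) \<ge> Qm + 1" using bb_pos by (simp add: field_simps)
    moreover have "Q (y s) \<le> Qm" unfolding Qm_def by (rule Qmax)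
    ultimately show "Q (y s) - bb * w s * y s \<le> - 1" by (simp add: algebra_simps)
  qed simp
  thus "eventually (\<lambda>s. y s < a) at_top"
    by eventually_elim (use a0 \<epsilon>_def in auto)
qed

definition "a0 = c0/bb"
definition "b0 = -(nn-2-4*p)/bb"
definition "R s = (y s)^2 + Q (y s)"
definition "z s = w s * y s"
definition "e s = R s - bb * z s"

lemma wne: "w s \<noteq> 0" using wpos[of s] by simp

lemma a0pos: "a0 > 0" unfolding a0_def using c0pos bb_pos by simp

lemma dz: "(z has_real_derivative w s * e s) (at s)"
proof -
  have "(z has_real_derivative (w s * y s * y s + (Q (y s) - bb * w s * y s) * w s)) (at s)"
    unfolding z_def[abs_def] by (rule DERIV_mult[OF dw dy'])
  moreover have "w s * y s * y s + (Q (y s) - bb * w s * y s) * w s = w s * e s"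
    unfolding e_def R_def z_def by (simp add: power2_eq_square algebra_simps)
  ultimately show ?thesis by simp
qed

lemma R_lim: "(R \<longlongrightarrow> c0) at_top"
proof -
  have "((\<lambda>s. (y s)^2 + (c0 - (nn-2-4*p)*y s - p*(y s)^2)) \<longlongrightarrow> 0^2 + (c0 - (nn-2-4*p)*0 - p*0^2)) at_top"
    by (intro tendsto_intros y0)
  thus ?thesis unfolding R_def Q_alt[abs_def] by simp
qed

lemma z_lim: "(z \<longlongrightarrow> a0) at_top"
proof (rule order_tendstoI)
  fix a' assume aa: "a' > a0"
  define \<epsilon> where "\<epsilon> = (a' - a0)/2"
  have e0: "\<epsilon> > 0" using aa unfolding \<epsilon>_def by (simp add: field_simps)
  have "eventually (\<lambda>s. R s < c0 + bb*\<epsilon>/2) at_top"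
    using order_tendstoD(2)[OF R_lim, of "c0 + bb*\<epsilon>/2"] e0 bb_pos by simp
  moreover have "eventually (\<lambda>s. w s \<ge> 2/(bb*\<epsilon>)) at_top" by (rule ev_w_ge)
  ultimately have "eventually (\<lambda>s. R s < c0 + bb*\<epsilon>/2 \<and> w s \<ge> 2/(bb*\<epsilon>)) at_top"
    by (rule eventually_conj)
  then obtain s1 where s1: "\<And>s. s \<ge> s1 \<Longrightarrow> R s < c0 + bb*\<epsilon>/2 \<and> w s \<ge> 2/(bb*\<epsilon>)"
    unfolding eventually_at_top_linorder by auto
  have "eventually (\<lambda>s. z s \<le> a0 + \<epsilon>) at_top"
  proof (rule barrier[of s1 z "\<lambda>s. w s * e s" 1])
    show "\<And>s. s1 \<le> s \<Longrightarrow> (z has_real_derivative w s * e s) (at s)" using dz by blast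
    fix s assume s: "s1 \<le> s" "a0 + \<epsilon> < z s"
    have "bb * z s > bb * (a0 + \<epsilon>)" using s bb_pos by simp
    hence "e s < - (bb*\<epsilon>/2)" using s1[OF s(1)] unfolding e_def a0_def using bb_pos by (simp add: algebra_simps)
    hence "w s * e s \<le> w s * (- (bb*\<epsilon>/2))" using wpos[of s] by (intro mult_left_mono) auto
    moreover have "w s * (bb*\<epsilon>/2) \<ge> 2/(bb*\<epsilon>) * (bb*\<epsilon>/2)"
      using s1[OF s(1)] bb_pos e0 by (intro mult_right_mono) auto
    moreover have "2/(bb*\<epsilon>) * (bb*\<epsilon>/2) = 1" using bb_pos e0 by simp
    ultimately show "w s * e s \<le> -1" by simp
  qed simp
  moreover have "a0 + \<epsilon> < a'" using aa unfolding \<epsilon>_def by (simp add: field_simps)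
  ultimately show "eventually (\<lambda>s. z s < a') at_top"
    by (auto elim: eventually_mono)
next
  fix a' assume aa: "a' < a0"
  define \<epsilon> where "\<epsilon> = (a0 - a')/2"
  have e0: "\<epsilon> > 0" using aa unfolding \<epsilon>_def by (simp add: field_simps)
  have "eventually (\<lambda>s. R s > c0 - bb*\<epsilon>/2) at_top"
    using order_tendstoD(1)[OF R_lim, of "c0 - bb*\<epsilon>/2"] e0 bb_pos by simp
  moreover have "eventually (\<lambda>s. w s \<ge> 2/(bb*\<epsilon>)) at_top" by (rule ev_w_ge)
  ultimately have "eventually (\<lambda>s. R s > c0 - bb*\<epsilon>/2 \<and> w s \<ge> 2/(bb*\<epsilon>)) at_top"
    by (rule eventually_conj)
  then obtain s1 where s1: "\<And>s. s \<ge> s1 \<Longrightarrow> R s > c0 - bb*\<epsilon>/2 \<and> w s \<ge> 2/(bb*\<epsilon>)"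
    unfolding eventually_at_top_linorder by auto
  have "eventually (\<lambda>s. - z s \<le> - (a0 - \<epsilon>)) at_top"
  proof (rule barrier[of s1 "\<lambda>s. - z s" "\<lambda>s. - (w s * e s)" 1])
    show "\<And>s. s1 \<le> s \<Longrightarrow> ((\<lambda>s. - z s) has_real_derivative - (w s * e s)) (at s)"
      using DERIV_minus[OF dz] by blast
    fix s assume s: "s1 \<le> s" "- (a0 - \<epsilon>) < - z s"
    have "bb * z s < bb * (a0 - \<epsilon>)" using s bb_pos by simp
    hence "e s > bb*\<epsilon>/2" using s1[OF s(1)] unfolding e_def a0_def using bb_pos by (simp add: algebra_simps)
    hence "w s * e s \<ge> w s * (bb*\<epsilon>/2)" using wpos[of s] by (intro mult_left_mono) auto
    moreover have "w s * (bb*\<epsilon>/2) \<ge> 2/(bb*\<epsilon>) * (bb*\<epsilon>/2)"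
      using s1[OF s(1)] bb_pos e0 by (intro mult_right_mono) auto
    moreover have "2/(bb*\<epsilon>) * (bb*\<epsilon>/2) = 1" using bb_pos e0 by simp
    ultimately show "- (w s * e s) \<le> -1" by simp
  qed simp
  moreover have "a' < a0 - \<epsilon>" using aa unfolding \<epsilon>_def by (simp add: field_simps)
  ultimately show "eventually (\<lambda>s. a' < z s) at_top"
    by (auto elim: eventually_mono)
qed

lemma wdivs: "((\<lambda>s. w s / s) \<longlongrightarrow> a0) at_top"
proof (rule lhospital_at_top_at_top[where f' = z and g' = "\<lambda>_. 1"])
  show "filterlim (\<lambda>s. s) at_top at_top" by (rule filterlim_ident)
  show "eventually (\<lambda>s. DERIV w s :> z s) at_top" using dw unfolding z_def by simp
  show "eventually (\<lambda>s. DERIV (\<lambda>s. s) s :> 1) at_top" by (auto intro!: derivative_eq_intros)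
  show "((\<lambda>s. z s / 1) \<longlongrightarrow> a0) at_top" using z_lim by simp
qed simp

lemma sy: "((\<lambda>s. s * y s) \<longlongrightarrow> 1) at_top"
proof -
  have "((\<lambda>s. z s / (w s / s)) \<longlongrightarrow> a0 / a0) at_top"
    using a0pos by (intro tendsto_divide z_lim wdivs) simp
  moreover have "eventually (\<lambda>s. z s / (w s / s) = s * y s) at_top"
    using eventually_gt_at_top[of 0] by eventually_elim (simp add: z_def field_simps wne)
  ultimately show ?thesis using a0pos by (simp add: tendsto_cong)
qed

end

context wysys begin

definition "G s = 2 * y s - 2*p*(y s - 2) - (nn-2)"
definition "psi s = s^2 * e s"

lemma poly_deriv:
  assumes "(f has_real_derivative F) (at s)" "(g has_real_derivative Gd) (at s)"
  shows "((\<lambda>s. (f s)^2 + (-p*(f s - 2)^2 - (nn-2)*(f s - 2)) - bb * g s) has_real_derivative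
      (2 * f s * F + (-p*(2*(f s - 2)*F) - (nn-2)*F) - bb * Gd)) (at s)"
  by (auto intro!: derivative_eq_intros assms simp: algebra_simps)

lemma de: "(e has_real_derivative (G s * (e s - (y s)^2) - bb * (w s * e s))) (at s)"
proof -
  obtain E where E: "E = e s" by simp
  have eq: "e = (\<lambda>s. (y s)^2 + (-p*(y s - 2)^2 - (nn-2)*(y s - 2)) - bb * z s)"
    unfolding e_def[abs_def] R_def[abs_def] Q_def by simp
  have "((\<lambda>s. (y s)^2 + (-p*(y s - 2)^2 - (nn-2)*(y s - 2)) - bb * z s) has_real_derivative
      (2 * y s * (Q (y s) - bb * w s * y s) + (-p*(2*(y s - 2)*(Q (y s) - bb * w s * y s)) - (nn-2)*(Q (y s) - bb * w s * y s)) - bb * (w s * E))) (at s)"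
    unfolding E by (rule poly_deriv[OF dy' dz])
  hence d: "(e has_real_derivative
      (2 * y s * (Q (y s) - bb * w s * y s) + (-p*(2*(y s - 2)*(Q (y s) - bb * w s * y s)) - (nn-2)*(Q (y s) - bb * w s * y s)) - bb * (w s * E))) (at s)"
    unfolding eq .
  have "Q (y s) - bb * w s * y s = E - (y s)^2"
    unfolding E e_def R_def z_def by simp
  note Yeq = this
  have "2 * y s * (Q (y s) - bb * w s * y s) + (-p*(2*(y s - 2)*(Q (y s) - bb * w s * y s)) - (nn-2)*(Q (y s) - bb * w s * y s)) - bb * (w s * E)
     = G s * (E - (y s)^2) - bb * (w s * E)"
    unfolding Yeq G_def by (simp add: algebra_simps)
  with d show ?thesis unfolding E by simp
qed

lemma G_lim: "(G \<longlongrightarrow> 4*p - nn + 2) at_top"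
proof -
  have "((\<lambda>s. 2 * y s - 2*p*(y s - 2) - (nn-2)) \<longlongrightarrow> 2 * 0 - 2*p*(0 - 2) - (nn-2)) at_top"
    by (intro tendsto_intros y0)
  thus ?thesis unfolding G_def[abs_def] by (simp add: algebra_simps)
qed

lemma ev_abs_bound: "(f \<longlongrightarrow> (c::real)) F \<Longrightarrow> eventually (\<lambda>x. \<bar>f x\<bar> \<le> \<bar>c\<bar> + 1) F"
proof -
  assume l: "(f \<longlongrightarrow> c) F"
  have "eventually (\<lambda>x. c - 1 < f x) F" using order_tendstoD(1)[OF l, of "c - 1"] by simp
  moreover have "eventually (\<lambda>x. f x < c + 1) F" using order_tendstoD(2)[OF l, of "c + 1"] by simp
  ultimately show ?thesis
    by eventually_elim (use abs_ge_self[of c] abs_ge_minus_self[of c] in \<open>auto simp: abs_le_iff\<close>)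
qed

lemma dpsi: "s \<noteq> 0 \<Longrightarrow> (psi has_real_derivative
   (psi s * (2/s + G s - bb * w s) - G s * (s * y s)^2)) (at s)"
proof -
  assume s: "s \<noteq> 0"
  have "((\<lambda>s. s^2 * e s) has_real_derivative (2 * s * e s + (G s * (e s - (y s)^2) - bb * (w s * e s)) * s^2)) (at s)"
    by (auto intro!: derivative_eq_intros de simp: power2_eq_square algebra_simps)
  moreover have "2 * s * e s + (G s * (e s - (y s)^2) - bb * (w s * e s)) * s^2
      = psi s * (2/s + G s - bb * w s) - G s * (s * y s)^2"
    unfolding psi_def using s by (simp add: power2_eq_square field_simps)
  ultimately show ?thesis unfolding psi_def[abs_def] by simp
qed

lemma psi_bdd: "\<exists>C. eventually (\<lambda>s. \<bar>psi s\<bar> \<le> C) at_top"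
proof -
  define g0 where "g0 = 4*p - nn + 2"
  define K1 where "K1 = \<bar>g0\<bar> + 1"
  have "((\<lambda>s. G s * (s * y s)^2) \<longlongrightarrow> g0 * 1^2) at_top"
    unfolding g0_def by (intro tendsto_intros G_lim sy)
  hence ev1: "eventually (\<lambda>s. \<bar>G s * (s * y s)^2\<bar> \<le> K1) at_top"
    unfolding K1_def using ev_abs_bound by simp
  have ev2: "eventually (\<lambda>s. \<bar>G s\<bar> \<le> K1) at_top"
    using ev_abs_bound[OF G_lim] unfolding K1_def g0_def by simp
  have ev3: "eventually (\<lambda>s. w s \<ge> (K1 + 4)/bb) at_top" by (rule ev_w_ge)
  have ev4: "eventually (\<lambda>s::real. s \<ge> 1) at_top" by (rule eventually_ge_at_top)
  obtain s1 where s1: "\<And>s. s \<ge> s1 \<Longrightarrow> \<bar>G s * (s * y s)^2\<bar> \<le> K1 \<and> \<bar>G s\<bar> \<le> K1 \<and> w s \<ge> (K1 + 4)/bb \<and> s \<ge> 1"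
    using eventually_conj[OF ev1 eventually_conj[OF ev2 eventually_conj[OF ev3 ev4]]]
    unfolding eventually_at_top_linorder by auto
  define D where "D s = 2/s + G s - bb * w s" for s
  have Dle: "D s \<le> -2" if "s \<ge> s1" for s
  proof -
    have h: "\<bar>G s\<bar> \<le> K1" "w s \<ge> (K1 + 4)/bb" "s \<ge> 1" using s1[OF that] by auto
    have "bb * w s \<ge> bb * ((K1 + 4)/bb)" using h bb_pos by (intro mult_left_mono) auto
    hence "bb * w s \<ge> K1 + 4" using bb_pos by simp
    moreover have "2/s \<le> 2" using h by (simp add: field_simps)
    ultimately show ?thesis unfolding D_def using h by linarith
  qed
  define C where "C = K1 + 1"
  have up: "eventually (\<lambda>s. psi s \<le> C) at_top"
  proof (rule barrier[of s1 psi "\<lambda>s. psi s * D s - G s * (s * y s)^2" 1])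
    show "\<And>s. s1 \<le> s \<Longrightarrow> (psi has_real_derivative psi s * D s - G s * (s * y s)^2) (at s)"
      unfolding D_def using s1 by (intro dpsi) force
    fix s assume s: "s1 \<le> s" "C < psi s"
    have "psi s * D s \<le> psi s * (-2)" using Dle[OF s(1)] s(2) unfolding C_def K1_def
      by (intro mult_left_mono) auto
    moreover have "- (G s * (s * y s)^2) \<le> K1" using s1[OF s(1)] by linarith
    moreover have "psi s * (-2) = -2 * psi s" by simp
    moreover have "K1 \<ge> 1" unfolding K1_def by simp
    ultimately show "psi s * D s - G s * (s * y s)^2 \<le> -1" using s(2) unfolding C_def by linarith
  qed simp
  have lo: "eventually (\<lambda>s. - psi s \<le> C) at_top"
  proof (rule barrier[of s1 "\<lambda>s. - psi s" "\<lambda>s. - (psi s * D s - G s * (s * y s)^2)" 1])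
    show "\<And>s. s1 \<le> s \<Longrightarrow> ((\<lambda>s. - psi s) has_real_derivative - (psi s * D s - G s * (s * y s)^2)) (at s)"
      unfolding D_def using s1 by (intro DERIV_minus dpsi) force
    fix s assume s: "s1 \<le> s" "C < - psi s"
    have "(- psi s) * D s \<le> (- psi s) * (-2)" using Dle[OF s(1)] s(2) unfolding C_def K1_def
      by (intro mult_left_mono) auto
    moreover have "G s * (s * y s)^2 \<le> K1" using s1[OF s(1)] by linarith
    moreover have "(- psi s) * (-2) = -2 * (- psi s)" by simp
    moreover have "K1 \<ge> 1" unfolding K1_def by simp
    moreover have "- (psi s * D s - G s * (s * y s)^2) = (- psi s) * D s + G s * (s * y s)^2" by simp
    ultimately show "- (psi s * D s - G s * (s * y s)^2) \<le> -1" using s(2) unfolding C_def by linarith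
  qed simp
  show ?thesis using eventually_conj[OF up lo] by (auto intro!: exI[of _ C] elim: eventually_mono)
qed

end

context wysys begin

lemma bbne: "bb \<noteq> 0" using bb_pos by simp

lemma z_alt: "z s = (R s - e s)/bb" unfolding e_def using bbne by (simp add: field_simps)

lemma sz_id: "s \<noteq> 0 \<Longrightarrow> s * (z s - a0) = b0*(s*y s) + ((1-p)/bb)*(s*y s)*y s - (psi s/s)/bb"
  unfolding z_alt R_def Q_alt a0_def b0_def psi_def using bb_pos
  by (simp add: power2_eq_square field_simps)

lemma at_inf_id: "filterlim (\<lambda>s::real. s) at_infinity at_top"
  by (rule filterlim_at_top_imp_at_infinity[OF filterlim_ident])

lemma at_inf_ln: "filterlim (\<lambda>s::real. ln s) at_infinity at_top"
  by (rule filterlim_at_top_imp_at_infinity[OF ln_at_top])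

lemma psis: "((\<lambda>s. psi s / s) \<longlongrightarrow> 0) at_top"
proof -
  obtain C where C: "eventually (\<lambda>s. \<bar>psi s\<bar> \<le> C) at_top" using psi_bdd by blast
  show ?thesis
  proof (rule Lim_null_comparison)
    show "eventually (\<lambda>s. norm (psi s / s) \<le> C / s) at_top"
      using eventually_conj[OF C eventually_gt_at_top[of 0]]
      by eventually_elim (simp add: abs_divide divide_right_mono)
    show "((\<lambda>s. C / s) \<longlongrightarrow> 0) at_top" by (rule tendsto_divide_0[OF tendsto_const at_inf_id])
  qed
qed

lemma szl: "((\<lambda>s. s * (z s - a0)) \<longlongrightarrow> b0) at_top"
proof -
  have "((\<lambda>s. b0*(s*y s) + ((1-p)/bb)*(s*y s)*y s - (psi s/s)/bb) \<longlongrightarrow> b0*1 + ((1-p)/bb)*1*0 - 0/bb) at_top"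
    by (intro tendsto_intros sy y0 psis) (auto simp: bbne)
  hence "((\<lambda>s. b0*(s*y s) + ((1-p)/bb)*(s*y s)*y s - (psi s/s)/bb) \<longlongrightarrow> b0) at_top" using bbne by simp
  moreover have "eventually (\<lambda>s. b0*(s*y s) + ((1-p)/bb)*(s*y s)*y s - (psi s/s)/bb = s * (z s - a0)) at_top"
    using eventually_gt_at_top[of 0] by eventually_elim (simp add: sz_id)
  ultimately show ?thesis by (rule Lim_transform_eventually)
qed

lemma kl: "((\<lambda>s. (w s - a0 * s) / ln s) \<longlongrightarrow> b0) at_top"
proof (rule lhospital_at_top_at_top[where f' = "\<lambda>s. z s - a0" and g' = "\<lambda>s. 1/s"])
  show "filterlim (ln::real\<Rightarrow>real) at_top at_top" by (rule ln_at_top)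
  show "eventually (\<lambda>s. 1/s \<noteq> (0::real)) at_top"
    using eventually_gt_at_top[of 0] by eventually_elim simp
  show "eventually (\<lambda>s. DERIV (\<lambda>s. w s - a0 * s) s :> z s - a0) at_top"
    by (intro always_eventually allI) (auto intro!: derivative_eq_intros dw simp: z_def)
  show "eventually (\<lambda>s::real. DERIV ln s :> 1/s) at_top"
    by (rule eventually_mono[OF eventually_gt_at_top[of "0::real"]]) (rule DERIV_ln_divide)
  have "eventually (\<lambda>s. s * (z s - a0) = (z s - a0) / (1/s)) at_top"
    using eventually_gt_at_top[of 0] by eventually_elim simp
  thus "((\<lambda>s. (z s - a0) / (1/s)) \<longlongrightarrow> b0) at_top"
    using szl by (rule Lim_transform_eventually[rotated])
qed

theorem main_asym: "((\<lambda>s. s^2 * (w s * y s - a0 - b0/s) / ln s) \<longlongrightarrow> -(b0^2/a0)) at_top"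
proof -
  obtain C where C: "eventually (\<lambda>s. \<bar>psi s\<bar> \<le> C) at_top" using psi_bdd by blast
  define T1 where "T1 s = b0 * (s / w s) * (s*(z s - a0)/ln s - (w s - a0 * s)/ln s)" for s
  define T2 where "T2 s = (((1-p)/bb)*(s*y s)^2) / ln s" for s
  define T3 where "T3 s = (psi s / bb) / ln s" for s
  have sw: "((\<lambda>s. 1 / (w s / s)) \<longlongrightarrow> 1 / a0) at_top"
    using a0pos by (intro tendsto_intros wdivs) simp
  have sw': "((\<lambda>s. s / w s) \<longlongrightarrow> 1 / a0) at_top"
    using sw by (simp add: wne)
  have l1: "(T1 \<longlongrightarrow> b0 * (1/a0) * (0 - b0)) at_top"
    unfolding T1_def[abs_def]
    by (intro tendsto_intros sw' kl tendsto_divide_0[OF szl at_inf_ln])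
  have l2: "(T2 \<longlongrightarrow> 0) at_top"
  proof -
    have "((\<lambda>s. ((1-p)/bb)*(s*y s)^2) \<longlongrightarrow> ((1-p)/bb)*1^2) at_top" by (intro tendsto_intros sy)
    from tendsto_divide_0[OF this at_inf_ln] show ?thesis unfolding T2_def[abs_def] .
  qed
  have l3: "(T3 \<longlongrightarrow> 0) at_top"
  proof (rule Lim_null_comparison)
    show "eventually (\<lambda>s. norm (T3 s) \<le> (C/bb) / ln s) at_top"
      using eventually_conj[OF C eventually_gt_at_top[of 1]]
    proof eventually_elim
      case (elim s)
      hence l0: "ln s > 0" by simp
      have "norm (T3 s) = \<bar>psi s\<bar> / (bb * ln s)" unfolding T3_def using bb_pos l0
        by (simp add: abs_divide abs_mult)
      also have "\<dots> \<le> C / (bb * ln s)" using elim bb_pos l0 by (intro divide_right_mono) auto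
      also have "\<dots> = (C/bb) / ln s" by simp
      finally show ?case .
    qed
    show "((\<lambda>s. (C/bb) / ln s) \<longlongrightarrow> 0) at_top" by (rule tendsto_divide_0[OF tendsto_const at_inf_ln])
  qed
  have lim: "((\<lambda>s. T1 s + T2 s - T3 s) \<longlongrightarrow> b0 * (1/a0) * (0 - b0) + 0 - 0) at_top"
    by (intro tendsto_intros l1 l2 l3)
  have eq: "eventually (\<lambda>s. T1 s + T2 s - T3 s = s^2 * (w s * y s - a0 - b0/s) / ln s) at_top"
    using eventually_gt_at_top[of 1]
  proof eventually_elim
    case (elim s)
    hence s0: "s > 0" and l0: "ln s > 0" by auto
    have h: "s * (z s - a0) = b0*(s*y s) + ((1-p)/bb)*(s*y s)*y s - (psi s/s)/bb"
      using s0 by (intro sz_id) simp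
    have T1eq: "T1 s = (b0 * s * (s * y s) - b0 * s) / ln s"
      unfolding T1_def z_def using s0 l0 wne[of s] by (simp add: field_simps)
    have "s^2 * (w s * y s - a0 - b0/s) = s * (s * (z s - a0)) - b0 * s"
      unfolding z_def using s0 by (simp add: power2_eq_square field_simps)
    hence "s^2 * (w s * y s - a0 - b0/s) = s * (b0*(s*y s) + ((1-p)/bb)*(s*y s)*y s - (psi s/s)/bb) - b0 * s"
      unfolding h .
    also have "\<dots> = b0 * s * (s * y s) - b0 * s + ((1-p)/bb)*(s*y s)^2 - psi s/bb"
      using s0 by (simp add: power2_eq_square field_simps)
    finally have eqL: "s^2 * (w s * y s - a0 - b0/s) / ln s = (b0 * s * (s * y s) - b0 * s + ((1-p)/bb)*(s*y s)^2 - psi s/bb) / ln s"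
      by simp
    show ?case unfolding T1eq T2_def T3_def eqL
      by (simp add: diff_divide_distrib add_divide_distrib)
  qed
  have "((\<lambda>s. s^2 * (w s * y s - a0 - b0/s) / ln s) \<longlongrightarrow> b0 * (1/a0) * (0 - b0) + 0 - 0) at_top"
    using lim eq by (rule Lim_transform_eventually)
  thus ?thesis by (simp add: power2_eq_square)
qed

end

lemma radial_line_deriv:
  fixes G :: "real^'n::finite \<Rightarrow> real" and \<phi> :: "real \<Rightarrow> real"
  assumes r: "r > 0" and eq: "\<And>u. u > 0 \<Longrightarrow> G (u *\<^sub>R axis i 1) = \<phi> u"
    and dif: "(\<lambda>t. G (r *\<^sub>R axis i 1 + t *\<^sub>R axis i 1)) differentiable (at 0)"
  shows "(\<phi> has_real_derivative pdiff i G (r *\<^sub>R axis i 1)) (at r)"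
proof -
  define g where "g t = G (r *\<^sub>R axis i 1 + t *\<^sub>R axis i 1)" for t
  have "(g has_real_derivative deriv g 0) (at (r + - r))"
    using dif unfolding g_def[abs_def] by (simp add: DERIV_deriv_iff_real_differentiable)
  hence d: "((\<lambda>u. g (u + - r)) has_real_derivative deriv g 0) (at r)"
    by (simp only: DERIV_shift)
  have "(\<phi> has_real_derivative deriv g 0) (at r)"
  proof (rule has_field_derivative_transform_within_open[OF d, of "{0<..}"])
    fix u :: real assume "u \<in> {0<..}"
    hence u: "u > 0" by simp
    have "r *\<^sub>R axis i 1 + (u + - r) *\<^sub>R axis i 1 = u *\<^sub>R (axis i 1 :: real^'n)"
      by (simp add: scaleR_add_left[symmetric])
    thus "g (u + - r) = \<phi> u" unfolding g_def using eq[OF u] by simp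
  qed (use r in auto)
  moreover have "pdiff i G (r *\<^sub>R axis i 1) = deriv g 0" unfolding pdiff_def g_def[abs_def] ..
  ultimately show ?thesis by simp
qed

lemma norm_two_axes:
  fixes i j :: "'n::finite"
  assumes "j \<noteq> i"
  shows "norm (a *\<^sub>R axis i (1::real) + b *\<^sub>R axis j 1 :: real^'n) = sqrt (a^2 + b^2)"
  using assms unfolding norm_eq_sqrt_inner
  by (simp add: inner_add_left inner_add_right inner_axis_axis power2_eq_square)

lemma pdiff_off_axis:
  fixes F :: "real^'n::finite \<Rightarrow> real"
  assumes ji: "j \<noteq> i" and r: "r > 0"
    and Ff: "\<And>y. F y = f (norm y)"
    and df: "\<And>\<rho>. \<rho> > 0 \<Longrightarrow> (f has_real_derivative f1 \<rho>) (at \<rho>)"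
  shows "pdiff j F (r *\<^sub>R axis i 1 + t *\<^sub>R axis j 1) = f1 (sqrt (r^2 + t^2)) * (t / sqrt (r^2 + t^2))"
proof -
  have pos: "r^2 + t^2 > 0" using r by (simp add: add_pos_nonneg)
  have fun_eq: "(\<lambda>u. F (r *\<^sub>R axis i 1 + t *\<^sub>R axis j 1 + u *\<^sub>R axis j 1)) = (\<lambda>u. f (sqrt (r^2 + (t + u)^2)))"
  proof
    fix u
    have eqv: "r *\<^sub>R axis i 1 + t *\<^sub>R axis j 1 + u *\<^sub>R axis j 1 = r *\<^sub>R axis i 1 + (t + u) *\<^sub>R (axis j 1 :: real^'n)"
      by (simp add: scaleR_add_left algebra_simps)
    show "F (r *\<^sub>R axis i 1 + t *\<^sub>R axis j 1 + u *\<^sub>R axis j 1) = f (sqrt (r^2 + (t + u)^2))"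
      by (simp only: eqv Ff norm_two_axes[OF ji])
  qed
  have dsq: "((\<lambda>u. sqrt (r^2 + (t + u)^2)) has_real_derivative t / sqrt (r^2 + t^2)) (at 0)"
    using pos by (auto intro!: derivative_eq_intros simp: field_simps)
  have "((\<lambda>u. f (sqrt (r^2 + (t + u)^2))) has_real_derivative f1 (sqrt (r^2 + t^2)) * (t / sqrt (r^2 + t^2))) (at 0)"
    using DERIV_chain2[OF df dsq] pos by simp
  thus ?thesis unfolding pdiff_def fun_eq by (rule DERIV_imp_deriv)
qed

lemma pdiff2_off_axis:
  fixes F :: "real^'n::finite \<Rightarrow> real"
  assumes ji: "j \<noteq> i" and r: "r > 0"
    and Ff: "\<And>y. F y = f (norm y)"
    and df: "\<And>\<rho>. \<rho> > 0 \<Longrightarrow> (f has_real_derivative f1 \<rho>) (at \<rho>)"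
    and df1: "(f1 has_real_derivative f2) (at r)"
  shows "pdiff j (pdiff j F) (r *\<^sub>R axis i 1) = f1 r / r"
proof -
  have fun_eq: "(\<lambda>t. pdiff j F (r *\<^sub>R axis i 1 + t *\<^sub>R axis j 1)) = (\<lambda>t. f1 (sqrt (r^2 + t^2)) * (t / sqrt (r^2 + t^2)))"
    using pdiff_off_axis[OF ji r Ff df] by auto
  have sr: "sqrt (r^2 + 0^2) = r" using r by simp
  have dsq: "((\<lambda>t. sqrt (r^2 + t^2)) has_real_derivative 0) (at 0)"
    using r by (auto intro!: derivative_eq_intros)
  have d1: "((\<lambda>t. f1 (sqrt (r^2 + t^2))) has_real_derivative f2 * 0) (at 0)"
    using DERIV_chain2[of f1 f2 "\<lambda>t. sqrt (r^2 + t^2)" 0 0] df1 dsq sr by simp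
  have d2: "((\<lambda>t. t / sqrt (r^2 + t^2)) has_real_derivative 1 / r) (at 0)"
    using r by (auto intro!: derivative_eq_intros simp: field_simps)
  have "((\<lambda>t. f1 (sqrt (r^2 + t^2)) * (t / sqrt (r^2 + t^2))) has_real_derivative (f2 * 0) * (0 / sqrt (r^2 + 0^2)) + 1 / r * f1 (sqrt (r^2 + 0^2))) (at 0)"
    by (rule DERIV_mult[OF d1 d2])
  hence "((\<lambda>t. f1 (sqrt (r^2 + t^2)) * (t / sqrt (r^2 + t^2))) has_real_derivative f1 r / r) (at 0)"
    using sr by simp
  moreover have "pdiff j (pdiff j F) (r *\<^sub>R axis i 1) = deriv (\<lambda>t. pdiff j F (r *\<^sub>R axis i 1 + t *\<^sub>R axis j 1)) 0"
    unfolding pdiff_def[of j "pdiff j F"] ..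
  ultimately show ?thesis unfolding fun_eq by (simp add: DERIV_imp_deriv)
qed

lemma pde_to_ode:
  fixes V :: "real^'n::finite \<Rightarrow> real" and v :: "real \<Rightarrow> real" and i :: 'n
  assumes sol: "radial_solution m \<beta> lam V" and Vv: "\<forall>x. V x = v (norm x)" and r: "r > 0"
  shows "(v has_real_derivative pdiff i V (r *\<^sub>R axis i 1)) (at r)"
    and "((\<lambda>r. v r powr m) has_real_derivative pdiff i (\<lambda>y. V y powr m) (r *\<^sub>R axis i 1)) (at r)"
    and "((\<lambda>r. pdiff i (\<lambda>y. V y powr m) (r *\<^sub>R axis i 1)) has_real_derivative
           pdiff i (pdiff i (\<lambda>y. V y powr m)) (r *\<^sub>R axis i 1)) (at r)"
    and "(real CARD('n) - 1) / m * (pdiff i (pdiff i (\<lambda>y. V y powr m)) (r *\<^sub>R axis i 1)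
           + (real CARD('n) - 1) * pdiff i (\<lambda>y. V y powr m) (r *\<^sub>R axis i 1) / r)
         + 2 * \<beta> / (1 - m) * v r + \<beta> * (r * pdiff i V (r *\<^sub>R axis i 1)) = 0"
proof -
  define F where "F = (\<lambda>y::real^'n. V y powr m)"
  define f1 where "f1 \<rho> = pdiff i F (\<rho> *\<^sub>R axis i 1)" for \<rho>
  have C1V: "C1_Rn V" using sol unfolding radial_solution_def by blast
  have C2F: "C2_Rn F" using sol unfolding radial_solution_def F_def by blast
  have pde: "\<And>x. (real CARD('n) - 1) / m * laplacian F x
           + 2 * \<beta> / (1 - m) * V x + \<beta> * (\<Sum>i\<in>UNIV. x $ i * pdiff i V x) = 0"
    using sol unfolding radial_solution_def F_def by blast
  have dV: "\<And>i x. (\<lambda>t. V (x + t *\<^sub>R axis i 1)) differentiable (at 0)"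
    using C1V unfolding C1_Rn_def by blast
  have dF: "\<And>i x. (\<lambda>t. F (x + t *\<^sub>R axis i 1)) differentiable (at 0)"
    using C2F unfolding C2_Rn_def C1_Rn_def by blast
  have dF1: "\<And>i j x. (\<lambda>t. pdiff j F (x + t *\<^sub>R axis i 1)) differentiable (at 0)"
    using C2F unfolding C2_Rn_def C1_Rn_def by blast
  have Vax: "V (u *\<^sub>R axis i 1) = v u" if "u > 0" for u
    using Vv that by simp
  have Fax: "F (u *\<^sub>R axis i 1) = v u powr m" if "u > 0" for u
    using Vax[OF that] unfolding F_def by simp
  have Ff: "F y = (\<lambda>r. v r powr m) (norm y)" for y unfolding F_def using Vv by simp
  have a: "(v has_real_derivative pdiff i V (\<rho> *\<^sub>R axis i 1)) (at \<rho>)" if "\<rho> > 0" for \<rho>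
    by (rule radial_line_deriv[OF that Vax dV])
  have b: "((\<lambda>r. v r powr m) has_real_derivative f1 \<rho>) (at \<rho>)" if "\<rho> > 0" for \<rho>
    unfolding f1_def by (rule radial_line_deriv[OF that Fax dF])
  have c: "(f1 has_real_derivative pdiff i (pdiff i F) (\<rho> *\<^sub>R axis i 1)) (at \<rho>)" if "\<rho> > 0" for \<rho>
    by (rule radial_line_deriv[OF that _ dF1]) (simp add: f1_def)
  show "(v has_real_derivative pdiff i V (r *\<^sub>R axis i 1)) (at r)" by (rule a[OF r])
  show "((\<lambda>r. v r powr m) has_real_derivative pdiff i (\<lambda>y. V y powr m) (r *\<^sub>R axis i 1)) (at r)"
    using b[OF r] unfolding f1_def F_def .
  show "((\<lambda>r. pdiff i (\<lambda>y. V y powr m) (r *\<^sub>R axis i 1)) has_real_derivative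
           pdiff i (pdiff i (\<lambda>y. V y powr m)) (r *\<^sub>R axis i 1)) (at r)"
    using c[OF r] unfolding f1_def[abs_def] F_def .
  define x where "x = r *\<^sub>R (axis i 1 :: real^'n)"
  have off: "pdiff j (pdiff j F) x = f1 r / r" if "j \<noteq> i" for j
    unfolding x_def by (rule pdiff2_off_axis[OF that r Ff b c[OF r]])
  have "laplacian F x = pdiff i (pdiff i F) x + (\<Sum>j\<in>UNIV - {i}. pdiff j (pdiff j F) x)"
    unfolding laplacian_def by (rule sum.remove) auto
  also have "(\<Sum>j\<in>UNIV - {i}. pdiff j (pdiff j F) x) = (\<Sum>j\<in>UNIV - {i}. f1 r / r)"
    using off by (intro sum.cong) auto
  also have "\<dots> = (real CARD('n) - 1) * (f1 r / r)"
  proof -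
    have "card (UNIV - {i}) = CARD('n) - 1" by (simp add: card_Diff_singleton)
    moreover have "CARD('n) \<ge> 1" by (simp add: Suc_leI)
    ultimately show ?thesis by (simp add: of_nat_diff)
  qed
  finally have lap: "laplacian F x = pdiff i (pdiff i F) x + (real CARD('n) - 1) * f1 r / r" by simp
  have sm: "(\<Sum>j\<in>UNIV. x $ j * pdiff j V x) = r * pdiff i V x"
  proof -
    have "(\<Sum>j\<in>UNIV. x $ j * pdiff j V x) = (\<Sum>j\<in>UNIV. if j = i then r * pdiff j V x else 0)"
      unfolding x_def by (intro sum.cong) (auto simp: axis_def)
    also have "\<dots> = r * pdiff i V x" by simp
    finally show ?thesis .
  qed
  have Vx: "V x = v r" unfolding x_def using Vax[OF r] .
  show "(real CARD('n) - 1) / m * (pdiff i (pdiff i (\<lambda>y. V y powr m)) (r *\<^sub>R axis i 1)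
           + (real CARD('n) - 1) * pdiff i (\<lambda>y. V y powr m) (r *\<^sub>R axis i 1) / r)
         + 2 * \<beta> / (1 - m) * v r + \<beta> * (r * pdiff i V (r *\<^sub>R axis i 1)) = 0"
    using pde[of x] unfolding lap sm Vx unfolding x_def f1_def F_def by simp
qed

lemma alg:
  fixes q V0 E m k N \<beta> f1 f2 v1 :: real
  assumes q: "q > 0" and V0: "V0 > 0" and E: "E > 0" and m: "m > 0" and k: "k > 0" and N: "N > 0"
    and v1: "v1 = f1 * V0 / (m * q)"
    and ode: "N/m*(f2 + N*f1/E) + 2*\<beta>/k*V0 + \<beta>*(E* v1) = 0"
  shows "k/m * (((E*f1 + f2*E*E) * q - (E*f1)*(f1*E)) / (q*q))
      = -(m/k)*(k/m*(E*f1/q))^2 - (N - 1)*(k/m*(E*f1/q))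
        - \<beta>/N * (E^2*(V0/q)) * (2 + k/m*(E*f1/q))"
proof -
  define K where "K = 2*\<beta>/k*V0 + \<beta>*(E* v1)"
  have h: "N/m*(f2 + N*f1/E) = - K" using ode unfolding K_def by linarith
  have "f2 + N*f1/E = (m/N) * (N/m*(f2 + N*f1/E))" using m N by simp
  also have "\<dots> = (m/N) * (- K)" unfolding h ..
  finally have "f2 + N*f1/E = - (m/N*K)" by simp
  hence f2: "f2 = - (m/N*K) - N*f1/E" by (simp add: eq_diff_eq)
  show ?thesis unfolding f2 K_def v1 using q V0 E m k N
    by (simp add: field_simps power2_eq_square)
qed

lemma s_conv:
  fixes v v1 f1 f2 :: "real \<Rightarrow> real" and m \<beta> n s :: real
  assumes m: "0 < m" "m < 1" and n: "n > 1"
    and vpos: "\<And>r. r > 0 \<Longrightarrow> v r > 0"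
    and dv: "\<And>r. r > 0 \<Longrightarrow> (v has_real_derivative v1 r) (at r)"
    and df: "\<And>r. r > 0 \<Longrightarrow> ((\<lambda>r. v r powr m) has_real_derivative f1 r) (at r)"
    and df1: "\<And>r. r > 0 \<Longrightarrow> (f1 has_real_derivative f2 r) (at r)"
    and ode: "\<And>r. r > 0 \<Longrightarrow> (n-1)/m*(f2 r + (n-1)*f1 r/r) + 2*\<beta>/(1-m)* v r + \<beta>*(r* v1 r) = 0"
  shows "((\<lambda>s. (exp s)^2 * v (exp s) powr (1-m)) has_real_derivative
            ((exp s)^2 * v (exp s) powr (1-m)) * (2 + (1-m)/m * (exp s * f1 (exp s) / v (exp s) powr m))) (at s)"
    and "((\<lambda>s. 2 + (1-m)/m * (exp s * f1 (exp s) / v (exp s) powr m)) has_real_derivative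
            (-(m/(1-m))*((2 + (1-m)/m * (exp s * f1 (exp s) / v (exp s) powr m)) - 2)^2
             - (n-2)*((2 + (1-m)/m * (exp s * f1 (exp s) / v (exp s) powr m)) - 2)
             - \<beta>/(n-1) * ((exp s)^2 * v (exp s) powr (1-m)) * (2 + (1-m)/m * (exp s * f1 (exp s) / v (exp s) powr m)))) (at s)"
proof -
  define E where "E = exp s"
  have E0: "E > 0" unfolding E_def by simp
  define V0 where "V0 = v E"
  have V00: "V0 > 0" unfolding V0_def using vpos[OF E0] .
  define q where "q = V0 powr m"
  have q0: "q > 0" unfolding q_def using V00 by simp
  have p1: "V0 powr (1 - m) = V0 / q" unfolding q_def using V00 by (simp add: powr_diff)
  have p2: "V0 powr (1 - m - 1) = 1 / q" unfolding q_def using V00 by (simp add: powr_minus divide_inverse)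
  have p3: "V0 powr (m - 1) = q / V0" unfolding q_def using V00 by (simp add: powr_diff)
  have "((\<lambda>r. v r powr m) has_real_derivative m * v E powr (m - of_nat 1) * v1 E) (at E)"
    by (rule DERIV_fun_powr[OF dv[OF E0] vpos[OF E0]])
  hence "f1 E = m * (q / V0) * v1 E" using DERIV_unique[OF df[OF E0]] p3 unfolding V0_def by simp
  hence v1E: "v1 E = f1 E * V0 / (m * q)" using m q0 V00 by (simp add: field_simps)
  have a1: "v E powr (1-m) = V0 / q" using p1 unfolding V0_def .
  have a2: "v E powr m = q" unfolding q_def V0_def ..
  have a3: "V0 powr (1 - m - of_nat 1) = 1 / q" using p2 by simp
  have a4: "exp s = E" unfolding E_def ..
  have dvE: "((\<lambda>s. v (exp s)) has_real_derivative v1 E * E) (at s)"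
    unfolding E_def by (rule DERIV_chain2[OF dv DERIV_exp]) simp
  have dpow: "((\<lambda>s. v (exp s) powr (1-m)) has_real_derivative (1-m) * V0 powr (1 - m - of_nat 1) * (v1 E * E)) (at s)"
    using DERIV_fun_powr[OF dvE, of "1-m"] vpos[OF E0] unfolding V0_def E_def by simp
  have dexp2: "((\<lambda>s. (exp s)^2) has_real_derivative 2 * E^2) (at s)"
    unfolding E_def by (auto intro!: derivative_eq_intros simp: power2_eq_square)
  have "((\<lambda>s. (exp s)^2 * v (exp s) powr (1-m)) has_real_derivative
           2 * E^2 * v (exp s) powr (1-m) + (1-m) * V0 powr (1 - m - of_nat 1) * (v1 E * E) * (exp s)^2) (at s)"
    by (rule DERIV_mult[OF dexp2 dpow])
  moreover have "2 * E^2 * v (exp s) powr (1-m) + (1-m) * V0 powr (1 - m - of_nat 1) * (v1 E * E) * (exp s)^2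
     = ((exp s)^2 * v (exp s) powr (1-m)) * (2 + (1-m)/m * (exp s * f1 (exp s) / v (exp s) powr m))"
  proof -
    have "2 * E^2 * v (exp s) powr (1-m) + (1-m) * V0 powr (1 - m - of_nat 1) * (v1 E * E) * (exp s)^2
        = 2 * E^2 * (V0 / q) + (1-m) * (1 / q) * (f1 E * V0 / (m * q) * E) * E^2"
      by (simp only: a4 a1 a3 v1E)
    also have "\<dots> = (E^2 * (V0 / q)) * (2 + (1-m)/m * (E * f1 E / q))"
      using m q0 V00 E0 by (simp add: field_simps power2_eq_square)
    also have "\<dots> = ((exp s)^2 * v (exp s) powr (1-m)) * (2 + (1-m)/m * (exp s * f1 (exp s) / v (exp s) powr m))"
      by (simp only: a4 a1 a2)
    finally show ?thesis .
  qed
  ultimately show "((\<lambda>s. (exp s)^2 * v (exp s) powr (1-m)) has_real_derivative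
            ((exp s)^2 * v (exp s) powr (1-m)) * (2 + (1-m)/m * (exp s * f1 (exp s) / v (exp s) powr m))) (at s)"
    by simp
  have df1E: "((\<lambda>s. f1 (exp s)) has_real_derivative f2 E * E) (at s)"
    unfolding E_def by (rule DERIV_chain2[OF df1 DERIV_exp]) simp
  have dqE: "((\<lambda>s. v (exp s) powr m) has_real_derivative f1 E * E) (at s)"
    unfolding E_def by (rule DERIV_chain2[OF df DERIV_exp, of s]) simp
  have dnum: "((\<lambda>s. exp s * f1 (exp s)) has_real_derivative E * f1 E + f2 E * E * E) (at s)"
    using DERIV_mult[OF DERIV_exp df1E] unfolding E_def by simp
  have "((\<lambda>s. exp s * f1 (exp s) / v (exp s) powr m) has_real_derivative
       ((E * f1 E + f2 E * E * E) * q - (E * f1 E) * (f1 E * E)) / (q * q)) (at s)"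
    using DERIV_divide[OF dnum dqE] q0 unfolding q_def V0_def E_def by simp
  hence "((\<lambda>s. 2 + (1-m)/m * (exp s * f1 (exp s) / v (exp s) powr m)) has_real_derivative
       0 + (1-m)/m * (((E * f1 E + f2 E * E * E) * q - (E * f1 E) * (f1 E * E)) / (q * q))) (at s)"
    by (intro DERIV_add DERIV_const DERIV_cmult)
  moreover have "(1-m)/m * (((E * f1 E + f2 E * E * E) * q - (E * f1 E) * (f1 E * E)) / (q * q))
     = -(m/(1-m))*((1-m)/m*(E*f1 E/q))^2 - ((n-1) - 1)*((1-m)/m*(E*f1 E/q))
        - \<beta>/(n-1) * (E^2*(V0/q)) * (2 + (1-m)/m*(E*f1 E/q))"
    by (rule alg[OF q0 V00 E0 m(1) _ _ v1E]) (use m n ode[OF E0] in \<open>auto simp: V0_def\<close>)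
  moreover have "(-(m/(1-m))*((2 + (1-m)/m * (exp s * f1 (exp s) / v (exp s) powr m)) - 2)^2
             - (n-2)*((2 + (1-m)/m * (exp s * f1 (exp s) / v (exp s) powr m)) - 2)
             - \<beta>/(n-1) * ((exp s)^2 * v (exp s) powr (1-m)) * (2 + (1-m)/m * (exp s * f1 (exp s) / v (exp s) powr m)))
     = -(m/(1-m))*((2 + (1-m)/m*(E*f1 E/q)) - 2)^2 - (n-2)*((2 + (1-m)/m*(E*f1 E/q)) - 2)
        - \<beta>/(n-1) * (E^2*(V0/q)) * (2 + (1-m)/m*(E*f1 E/q))"
    by (simp only: a4 a1 a2)
  moreover have "-(m/(1-m))*((2 + (1-m)/m*(E*f1 E/q)) - 2)^2 - (n-2)*((2 + (1-m)/m*(E*f1 E/q)) - 2)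
        - \<beta>/(n-1) * (E^2*(V0/q)) * (2 + (1-m)/m*(E*f1 E/q))
      = -(m/(1-m))*((1-m)/m*(E*f1 E/q))^2 - ((n-1) - 1)*((1-m)/m*(E*f1 E/q))
        - \<beta>/(n-1) * (E^2*(V0/q)) * (2 + (1-m)/m*(E*f1 E/q))"
    by simp
  ultimately show "((\<lambda>s. 2 + (1-m)/m * (exp s * f1 (exp s) / v (exp s) powr m)) has_real_derivative
            (-(m/(1-m))*((2 + (1-m)/m * (exp s * f1 (exp s) / v (exp s) powr m)) - 2)^2
             - (n-2)*((2 + (1-m)/m * (exp s * f1 (exp s) / v (exp s) powr m)) - 2)
             - \<beta>/(n-1) * ((exp s)^2 * v (exp s) powr (1-m)) * (2 + (1-m)/m * (exp s * f1 (exp s) / v (exp s) powr m)))) (at s)"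
    by simp
qed

lemma const_simp:
  fixes a N M k \<beta> :: real
  assumes "k \<noteq> 0" "M \<noteq> 0" "\<beta> \<noteq> 0" "a \<noteq> 0"
  shows "(a * N / (k * \<beta>))^2 / (2 * a * M / (k * \<beta>)) = a * N^2 / (2 * M * k * \<beta>)"
  using assms by (simp add: field_simps power2_eq_square)

theorem lemma2p5:
  fixes V :: "real^'n::finite \<Rightarrow> real" and v :: "real \<Rightarrow> real"
    and m \<beta> lam :: real and n :: real
    and w h h1 :: "real \<Rightarrow> real"
  assumes n_def: "n = real CARD('n)"
    and n3: "n \<ge> 3"
    and m_pos: "0 < m" and m_lt: "m < (n - 2) / n" and m_ne: "m \<noteq> (n - 2) / (n + 2)"
    and lam_pos: "lam > 0" and beta: "\<beta> > 0"
    and sol: "radial_solution m \<beta> lam V"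
    and Vv: "\<forall>x. V x = v (norm x)"
    and w_def: "\<forall>s. w s = (exp s)\<^sup>2 * v (exp s) powr (1 - m)"
    and h_def: "\<forall>s. h s = w s - 2 * (n - 1) * (n - 2 - n * m) / ((1 - m) * \<beta>) * s"
    and h1_def: "\<forall>s. h1 s = h s + (n - 1) * (n - 2 - (n + 2) * m) / ((1 - m) * \<beta>) * ln s"
  shows "((\<lambda>s. s\<^sup>2 * deriv h1 s / ln s) \<longlongrightarrow>
           - ((n - 1) * (n - 2 - (n + 2) * m)\<^sup>2 / (2 * (n - 2 - n * m) * (1 - m) * \<beta>))) at_top"
proof -
  have n0: "n > 0" using n3 by simp
  have nm: "n * m < n - 2" using m_lt n0 by (simp add: pos_less_divide_eq mult.commute)
  have m1: "m < 1" using nm n0 m_pos by (smt (verit) mult_le_cancel_left1)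
  have n1: "n > 1" using n3 by simp
  obtain i0 :: 'n where "i0 = i0" by blast
  define v1 where "v1 r = pdiff i0 V (r *\<^sub>R axis i0 1)" for r
  define f1 where "f1 r = pdiff i0 (\<lambda>y. V y powr m) (r *\<^sub>R axis i0 1)" for r
  define f2 where "f2 r = pdiff i0 (pdiff i0 (\<lambda>y. V y powr m)) (r *\<^sub>R axis i0 1)" for r
  have dv: "\<And>r. r > 0 \<Longrightarrow> (v has_real_derivative v1 r) (at r)"
    unfolding v1_def by (rule pde_to_ode(1)[OF sol Vv])
  have df: "\<And>r. r > 0 \<Longrightarrow> ((\<lambda>r. v r powr m) has_real_derivative f1 r) (at r)"
    unfolding f1_def by (rule pde_to_ode(2)[OF sol Vv])
  have df1: "\<And>r. r > 0 \<Longrightarrow> (f1 has_real_derivative f2 r) (at r)"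
    unfolding f1_def[abs_def] f2_def by (rule pde_to_ode(3)[OF sol Vv])
  have ode: "\<And>r. r > 0 \<Longrightarrow> (n-1)/m*(f2 r + (n-1)*f1 r/r) + 2*\<beta>/(1-m)* v r + \<beta>*(r * v1 r) = 0"
    unfolding f1_def f2_def v1_def n_def by (rule pde_to_ode(4)[OF sol Vv])
  have Vpos: "\<And>x. V x > 0" using sol unfolding radial_solution_def by blast
  have V0: "V 0 = lam" using sol unfolding radial_solution_def by blast
  have Vax: "\<And>r. r > 0 \<Longrightarrow> V (r *\<^sub>R axis i0 1) = v r" using Vv by simp
  have vpos: "\<And>r. r > 0 \<Longrightarrow> v r > 0" using Vpos Vax by metis
  define y where "y s = 2 + (1-m)/m * (exp s * f1 (exp s) / v (exp s) powr m)" for s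
  have wfun: "w = (\<lambda>s. (exp s)^2 * v (exp s) powr (1-m))" using w_def by auto
  have conv1: "(w has_real_derivative w s * y s) (at s)" for s
    unfolding wfun y_def by (rule s_conv(1)[OF m_pos m1 n1 vpos dv df df1 ode])
  have conv2: "(y has_real_derivative (-(m/(1-m))*(y s - 2)^2 - (n-2)*(y s - 2) - \<beta>/(n-1) * w s * y s)) (at s)" for s
    unfolding wfun y_def[abs_def] by (rule s_conv(2)[OF m_pos m1 n1 vpos dv df df1 ode])
  have wpos: "w s > 0" for s unfolding wfun using vpos[of "exp s"] by simp
  have wbot: "(w \<longlongrightarrow> 0) at_bot"
  proof -
    have "((\<lambda>t. V (0 + t *\<^sub>R axis i0 1)) \<longlongrightarrow> V (0 + 0 *\<^sub>R axis i0 1)) (at 0)"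
    proof -
      have "(\<lambda>t. V (0 + t *\<^sub>R axis i0 1)) differentiable (at 0)"
        using sol unfolding radial_solution_def C1_Rn_def by blast
      hence "isCont (\<lambda>t. V (0 + t *\<^sub>R axis i0 1)) 0" by (rule differentiable_imp_continuous_within)
      thus ?thesis by (simp add: isCont_def)
    qed
    hence "((\<lambda>t. V (t *\<^sub>R axis i0 1)) \<longlongrightarrow> lam) (at_right 0)"
      using V0 by (simp add: filterlim_at_split)
    moreover have "eventually (\<lambda>t. V (t *\<^sub>R axis i0 1) = v t) (at_right 0)"
      using eventually_at_right_less[of 0] Vax by (auto elim: eventually_mono)
    ultimately have vlim: "(v \<longlongrightarrow> lam) (at_right 0)" by (rule Lim_transform_eventually)
    have "filterlim (exp::real\<Rightarrow>real) (at_right 0) at_bot"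
      unfolding filterlim_at using exp_at_bot by (auto intro: always_eventually)
    hence "((\<lambda>s. v (exp s)) \<longlongrightarrow> lam) at_bot" by (rule filterlim_compose[OF vlim])
    hence "((\<lambda>s. v (exp s) powr (1 - m)) \<longlongrightarrow> lam powr (1 - m)) at_bot"
      using lam_pos by (intro tendsto_intros) auto
    moreover have "((\<lambda>s::real. (exp s)^2) \<longlongrightarrow> (0::real)^2) at_bot" by (intro tendsto_intros exp_at_bot)
    ultimately have "((\<lambda>s. (exp s)^2 * v (exp s) powr (1 - m)) \<longlongrightarrow> 0^2 * lam powr (1 - m)) at_bot"
      by (intro tendsto_mult)
    thus ?thesis unfolding wfun by simp
  qed
  have c0: "n - 2 - 2 * (m/(1-m)) > 0"
  proof -
    have "n - 2 - 2 * (m/(1-m)) = (n - 2 - n*m)/(1-m)" using m1 by (simp add: field_simps)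
    thus ?thesis using nm m1 by simp
  qed
  interpret W: wysys "m/(1-m)" "\<beta>/(n-1)" n w y
  proof
    show "0 < m / (1 - m)" using m_pos m1 by simp
    show "0 < \<beta> / (n - 1)" using beta n1 by simp
    show "0 < n - 2 - 2 * (m / (1 - m))" by (rule c0)
    show "\<And>s. 0 < w s" by (rule wpos)
    show "\<And>s. (w has_real_derivative w s * y s) (at s)" by (rule conv1)
    show "\<And>s. (y has_real_derivative - (m / (1 - m)) * (y s - 2)\<^sup>2 - (n - 2) * (y s - 2) - \<beta> / (n - 1) * w s * y s) (at s)"
      by (rule conv2)
    show "(w \<longlongrightarrow> 0) at_bot" by (rule wbot)
  qed
  define A where "A = 2 * (n - 1) * (n - 2 - n * m) / ((1 - m) * \<beta>)"
  define B where "B = (n - 1) * (n - 2 - (n + 2) * m) / ((1 - m) * \<beta>)"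
  have aA: "W.a0 = A" unfolding W.a0_def W.c0_def A_def using m1 n1 beta by (simp add: field_simps)
  have bB: "W.b0 = - B" unfolding W.b0_def B_def using m1 n1 beta by (simp add: field_simps)
  have h1fun: "h1 = (\<lambda>s. w s - A * s + B * ln s)" using h1_def h_def unfolding A_def B_def by auto
  have dh1: "deriv h1 s = w s * y s - A + B / s" if "s > 0" for s
  proof -
    have "(h1 has_real_derivative w s * y s - A * 1 + B * (1 / s)) (at s)"
      unfolding h1fun by (rule DERIV_add[OF DERIV_diff[OF conv1 DERIV_cmult[OF DERIV_ident]] DERIV_cmult[OF DERIV_ln_divide[OF that]]])
    thus ?thesis by (simp add: DERIV_imp_deriv)
  qed
  have lim: "((\<lambda>s. s^2 * (w s * y s - W.a0 - W.b0/s) / ln s) \<longlongrightarrow> -(W.b0^2/W.a0)) at_top"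
    by (rule W.main_asym)
  have "eventually (\<lambda>s. s^2 * (w s * y s - W.a0 - W.b0/s) / ln s = s\<^sup>2 * deriv h1 s / ln s) at_top"
    using eventually_gt_at_top[of "0::real"] by eventually_elim (simp add: dh1 aA bB)
  from Lim_transform_eventually[OF lim this]
  have "((\<lambda>s. s\<^sup>2 * deriv h1 s / ln s) \<longlongrightarrow> -(B^2/A)) at_top" by (simp add: aA bB)
  moreover have "-(B^2/A) = - ((n - 1) * (n - 2 - (n + 2) * m)\<^sup>2 / (2 * (n - 2 - n * m) * (1 - m) * \<beta>))"
    unfolding A_def B_def using m1 n1 beta nm by (subst const_simp) auto
  ultimately show ?thesis by simp
qed

end
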